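(* Let $\mathcal G$ be a second countable ample groupoid whose unit space $\mathcal G^{(0)}$ is Hausdorff, let $\ell$ be a field, and let $\nu:\mathcal G^{(2)}\to\mathcal U(\ell)$ be a normalized continuous $2$-cocycle. Assume that $\mathcal G$ is effective, that for every nonzero $f\in\mathcal A(\mathcal G,\nu)$ the support $\operatorname{supp}(f)=\{\xi:f(\xi)\neq0\}$ has nonempty interior, and that $\mathcal G$ is minimal. Then $\mathcal A(\mathcal G,\nu)$ is simple.
   Context: An ample groupoid is an étale topological groupoid (possibly non-Hausdorff) whose topology has a basis of compact open slices, where a slice is an open set on which the domain map $d$ and the range map are injective. $\mathcal G$ is effective if the interior of its isotropy is $\mathcal G^{(0)}$, and minimal if every orbit in $\mathcal G^{(0)}$ is dense. A continuous $2$-cocycle is a locally constant map $\nu:\mathcal G^{(2)}\to\mathcal U(\ell)$ (with $\mathcal U(\ell)$ discrete) satisfying $\nu(\xi_1,\xi_2)\nu(\xi_1\xi_2,\xi_3)=\nu(\xi_1,\xi_2\xi_3)\nu(\xi_2,\xi_3)$; it is normalized if $\nu(\xi,d(\xi))=\nu(d(\xi^{-1}),\xi)=1$ for all $\xi$. The twisted Steinberg algebra $\mathcal A(\mathcal G,\nu)$ is the $\ell$-module spanned by the functions $\mathcal G\to\ell$ which are continuous (for discrete $\ell$) and compactly supported on some Hausdorff open subset and zero outside it (equivalently, the span of characteristic functions of compact open slices), with product $(f\star_\nu g)(\xi)=\sum_{\xi=\xi_1\xi_2}\nu(\xi_1,\xi_2)f(\xi_1)g(\xi_2)$. *)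

theory Defs
  imports "HOL-Analysis.Analysis"
begin

text \<open>A groupoid is given by a topology T whose carrier topspace T is the set of arrows,
  domain (source) map d, range map r, a (total, but only meaningful on composable pairs)
  composition mul and inversion iv.\<close>

definition composable :: "'g set \<Rightarrow> ('g \<Rightarrow> 'g) \<Rightarrow> ('g \<Rightarrow> 'g) \<Rightarrow> ('g \<times> 'g) set" where
  "composable G d r = {(a, b). a \<in> G \<and> b \<in> G \<and> d a = r b}"

definition unit_space :: "'g set \<Rightarrow> ('g \<Rightarrow> 'g) \<Rightarrow> 'g set" where
  "unit_space G d = d ` G"

definition groupoid ::
  "'g set \<Rightarrow> ('g \<Rightarrow> 'g) \<Rightarrow> ('g \<Rightarrow> 'g) \<Rightarrow> ('g \<Rightarrow> 'g \<Rightarrow> 'g) \<Rightarrow> ('g \<Rightarrow> 'g) \<Rightarrow> bool" where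
  "groupoid G d r mul iv \<longleftrightarrow>
     (\<forall>a\<in>G. d a \<in> G \<and> r a \<in> G \<and> d (d a) = d a \<and> r (d a) = d a
              \<and> d (r a) = r a \<and> r (r a) = r a) \<and>
     (\<forall>a\<in>G. \<forall>b\<in>G. d a = r b \<longrightarrow>
              mul a b \<in> G \<and> d (mul a b) = d b \<and> r (mul a b) = r a) \<and>
     (\<forall>a\<in>G. \<forall>b\<in>G. \<forall>c\<in>G. d a = r b \<longrightarrow> d b = r c \<longrightarrow>
              mul (mul a b) c = mul a (mul b c)) \<and>
     (\<forall>a\<in>G. mul (r a) a = a \<and> mul a (d a) = a) \<and>
     (\<forall>a\<in>G. iv a \<in> G \<and> d (iv a) = r a \<and> r (iv a) = d a
              \<and> mul (iv a) a = d a \<and> mul a (iv a) = r a)"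

definition topological_groupoid ::
  "'g topology \<Rightarrow> ('g \<Rightarrow> 'g) \<Rightarrow> ('g \<Rightarrow> 'g) \<Rightarrow> ('g \<Rightarrow> 'g \<Rightarrow> 'g) \<Rightarrow> ('g \<Rightarrow> 'g) \<Rightarrow> bool" where
  "topological_groupoid T d r mul iv \<longleftrightarrow>
     groupoid (topspace T) d r mul iv \<and>
     continuous_map
       (subtopology (prod_topology T T) (composable (topspace T) d r)) T (\<lambda>(a, b). mul a b) \<and>
     continuous_map T T iv"

definition etale_groupoid ::
  "'g topology \<Rightarrow> ('g \<Rightarrow> 'g) \<Rightarrow> ('g \<Rightarrow> 'g) \<Rightarrow> ('g \<Rightarrow> 'g \<Rightarrow> 'g) \<Rightarrow> ('g \<Rightarrow> 'g) \<Rightarrow> bool" where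
  "etale_groupoid T d r mul iv \<longleftrightarrow>
     topological_groupoid T d r mul iv \<and>
     (\<forall>x\<in>topspace T. \<exists>U. openin T U \<and> x \<in> U \<and> openin T (d ` U) \<and>
        homeomorphic_map (subtopology T U) (subtopology T (d ` U)) d)"

definition slice :: "'g topology \<Rightarrow> ('g \<Rightarrow> 'g) \<Rightarrow> ('g \<Rightarrow> 'g) \<Rightarrow> 'g set \<Rightarrow> bool" where
  "slice T d r U \<longleftrightarrow> openin T U \<and> inj_on d U \<and> inj_on r U"

definition compact_open_slice :: "'g topology \<Rightarrow> ('g \<Rightarrow> 'g) \<Rightarrow> ('g \<Rightarrow> 'g) \<Rightarrow> 'g set \<Rightarrow> bool" where
  "compact_open_slice T d r U \<longleftrightarrow> slice T d r U \<and> compactin T U"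

definition ample_groupoid ::
  "'g topology \<Rightarrow> ('g \<Rightarrow> 'g) \<Rightarrow> ('g \<Rightarrow> 'g) \<Rightarrow> ('g \<Rightarrow> 'g \<Rightarrow> 'g) \<Rightarrow> ('g \<Rightarrow> 'g) \<Rightarrow> bool" where
  "ample_groupoid T d r mul iv \<longleftrightarrow>
     etale_groupoid T d r mul iv \<and>
     (\<forall>W x. openin T W \<and> x \<in> W \<longrightarrow>
        (\<exists>U. compact_open_slice T d r U \<and> x \<in> U \<and> U \<subseteq> W))"

definition isotropy :: "'g set \<Rightarrow> ('g \<Rightarrow> 'g) \<Rightarrow> ('g \<Rightarrow> 'g) \<Rightarrow> 'g set" where
  "isotropy G d r = {a \<in> G. d a = r a}"

definition effective :: "'g topology \<Rightarrow> ('g \<Rightarrow> 'g) \<Rightarrow> ('g \<Rightarrow> 'g) \<Rightarrow> bool" where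
  "effective T d r \<longleftrightarrow> T interior_of (isotropy (topspace T) d r) = unit_space (topspace T) d"

definition orbit :: "'g set \<Rightarrow> ('g \<Rightarrow> 'g) \<Rightarrow> ('g \<Rightarrow> 'g) \<Rightarrow> 'g \<Rightarrow> 'g set" where
  "orbit G d r u = {r a | a. a \<in> G \<and> d a = u}"

definition minimal :: "'g topology \<Rightarrow> ('g \<Rightarrow> 'g) \<Rightarrow> ('g \<Rightarrow> 'g) \<Rightarrow> bool" where
  "minimal T d r \<longleftrightarrow>
     (\<forall>u \<in> unit_space (topspace T) d.
        (subtopology T (unit_space (topspace T) d)) closure_of (orbit (topspace T) d r u)
          = unit_space (topspace T) d)"

text \<open>Continuous (= locally constant, values in the discrete group of unit_space of the field)
  normalized 2-cocycle.\<close>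
definition normalized_continuous_2cocycle ::
  "'g topology \<Rightarrow> ('g \<Rightarrow> 'g) \<Rightarrow> ('g \<Rightarrow> 'g) \<Rightarrow> ('g \<Rightarrow> 'g \<Rightarrow> 'g) \<Rightarrow> ('g \<Rightarrow> 'g)
    \<Rightarrow> ('g \<Rightarrow> 'g \<Rightarrow> 'k::field) \<Rightarrow> bool" where
  "normalized_continuous_2cocycle T d r mul iv \<nu> \<longleftrightarrow>
     (let G = topspace T; G2 = composable G d r in
       (\<forall>(a, b) \<in> G2. \<nu> a b \<noteq> 0) \<and>
       (\<forall>p \<in> G2. \<exists>W. openin (subtopology (prod_topology T T) G2) W \<and> p \<in> W \<and>
           (\<forall>q \<in> W. \<nu> (fst q) (snd q) = \<nu> (fst p) (snd p))) \<and>
       (\<forall>a\<in>G. \<forall>b\<in>G. \<forall>c\<in>G. d a = r b \<longrightarrow> d b = r c \<longrightarrow>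
           \<nu> a b * \<nu> (mul a b) c = \<nu> a (mul b c) * \<nu> b c) \<and>
       (\<forall>a\<in>G. \<nu> a (d a) = 1 \<and> \<nu> (d (iv a)) a = 1))"

text \<open>The twisted Steinberg algebra (as a set of functions G \<rightarrow> k, zero off G):
  the k-span of characteristic functions of compact open slices.\<close>
definition steinberg_algebra :: "'g topology \<Rightarrow> ('g \<Rightarrow> 'g) \<Rightarrow> ('g \<Rightarrow> 'g) \<Rightarrow> ('g \<Rightarrow> 'k::field) set" where
  "steinberg_algebra T d r =
     {f. \<exists>F c. finite F \<and> (\<forall>U\<in>F. compact_open_slice T d r U) \<and>
             f = (\<lambda>x. \<Sum>U\<in>F. c U * indicator U x)}"

definition twisted_conv ::
  "'g set \<Rightarrow> ('g \<Rightarrow> 'g) \<Rightarrow> ('g \<Rightarrow> 'g) \<Rightarrow> ('g \<Rightarrow> 'g \<Rightarrow> 'g) \<Rightarrow> ('g \<Rightarrow> 'g \<Rightarrow> 'k::field)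
     \<Rightarrow> ('g \<Rightarrow> 'k) \<Rightarrow> ('g \<Rightarrow> 'k) \<Rightarrow> ('g \<Rightarrow> 'k)" where
  "twisted_conv G d r mul \<nu> f g = (\<lambda>x.
     \<Sum>(a, b) \<in> {(a, b). a \<in> G \<and> b \<in> G \<and> d a = r b \<and> mul a b = x \<and> f a \<noteq> 0 \<and> g b \<noteq> 0}.
        \<nu> a b * f a * g b)"

definition two_sided_ideal ::
  "('g \<Rightarrow> 'k::field) set \<Rightarrow> (('g \<Rightarrow> 'k) \<Rightarrow> ('g \<Rightarrow> 'k) \<Rightarrow> ('g \<Rightarrow> 'k)) \<Rightarrow> ('g \<Rightarrow> 'k) set \<Rightarrow> bool" where
  "two_sided_ideal A prd I \<longleftrightarrow>
     I \<subseteq> A \<and> (\<lambda>_. 0) \<in> I \<and>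
     (\<forall>f\<in>I. \<forall>g\<in>I. (\<lambda>x. f x + g x) \<in> I) \<and>
     (\<forall>f\<in>I. (\<lambda>x. - f x) \<in> I) \<and>
     (\<forall>f\<in>I. \<forall>a\<in>A. prd a f \<in> I \<and> prd f a \<in> I)"

definition simple_algebra ::
  "('g \<Rightarrow> 'k::field) set \<Rightarrow> (('g \<Rightarrow> 'k) \<Rightarrow> ('g \<Rightarrow> 'k) \<Rightarrow> ('g \<Rightarrow> 'k)) \<Rightarrow> bool" where
  "simple_algebra A prd \<longleftrightarrow>
     (\<forall>I. two_sided_ideal A prd I \<longrightarrow> I = {\<lambda>_. 0} \<or> I = A)"

end

theory Submission
  imports Defs
begin

locale AG =
  fixes T :: "'g topology" and d r :: "'g \<Rightarrow> 'g" and mul :: "'g \<Rightarrow> 'g \<Rightarrow> 'g"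
    and iv :: "'g \<Rightarrow> 'g" and \<nu> :: "'g \<Rightarrow> 'g \<Rightarrow> 'k::field"
  assumes ample: "ample_groupoid T d r mul iv"
    and coc: "normalized_continuous_2cocycle T d r mul iv \<nu>"
begin

abbreviation "G \<equiv> topspace T"
abbreviation "G0 \<equiv> d ` G"

lemma grp: "groupoid G d r mul iv"
  using ample unfolding ample_groupoid_def etale_groupoid_def topological_groupoid_def by blast

lemma dG[simp]: "a \<in> G \<Longrightarrow> d a \<in> G" and rG[simp]: "a \<in> G \<Longrightarrow> r a \<in> G"
  and dd[simp]: "a \<in> G \<Longrightarrow> d (d a) = d a" and rd[simp]: "a \<in> G \<Longrightarrow> r (d a) = d a"
  and dr[simp]: "a \<in> G \<Longrightarrow> d (r a) = r a" and rr[simp]: "a \<in> G \<Longrightarrow> r (r a) = r a"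
  using grp unfolding groupoid_def by auto

lemma mulG[simp]: "a \<in> G \<Longrightarrow> b \<in> G \<Longrightarrow> d a = r b \<Longrightarrow> mul a b \<in> G"
  and dmul[simp]: "a \<in> G \<Longrightarrow> b \<in> G \<Longrightarrow> d a = r b \<Longrightarrow> d (mul a b) = d b"
  and rmul[simp]: "a \<in> G \<Longrightarrow> b \<in> G \<Longrightarrow> d a = r b \<Longrightarrow> r (mul a b) = r a"
  using grp unfolding groupoid_def by auto

lemma assoc: "a \<in> G \<Longrightarrow> b \<in> G \<Longrightarrow> c \<in> G \<Longrightarrow> d a = r b \<Longrightarrow> d b = r c \<Longrightarrow>
    mul (mul a b) c = mul a (mul b c)"
  using grp unfolding groupoid_def by blast

lemma mul_r[simp]: "a \<in> G \<Longrightarrow> mul (r a) a = a" and mul_d[simp]: "a \<in> G \<Longrightarrow> mul a (d a) = a"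
  using grp unfolding groupoid_def by auto

lemma ivG[simp]: "a \<in> G \<Longrightarrow> iv a \<in> G" and div[simp]: "a \<in> G \<Longrightarrow> d (iv a) = r a"
  and riv[simp]: "a \<in> G \<Longrightarrow> r (iv a) = d a" and mul_iv_l[simp]: "a \<in> G \<Longrightarrow> mul (iv a) a = d a"
  and mul_iv_r[simp]: "a \<in> G \<Longrightarrow> mul a (iv a) = r a"
  using grp unfolding groupoid_def by auto

lemma iviv[simp]: "a \<in> G \<Longrightarrow> iv (iv a) = a"
proof -
  assume a: "a \<in> G"
  let ?c = "iv a"
  have "a = mul a (d a)" using a by simp
  also have "d a = mul ?c (iv ?c)" using a by simp
  also have "mul a (mul ?c (iv ?c)) = mul (mul a ?c) (iv ?c)" by (rule assoc[symmetric]) (use a in simp_all)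
  also have "mul a ?c = r (iv ?c)" using a by simp
  also have "mul (r (iv ?c)) (iv ?c) = iv ?c" using a by (intro mul_r) simp
  finally show ?thesis by simp
qed

lemma unitE: "u \<in> G0 \<Longrightarrow> u \<in> G \<and> d u = u \<and> r u = u"
  by auto

lemma nu_r[simp]: "a \<in> G \<Longrightarrow> \<nu> (r a) a = 1" and nu_d[simp]: "a \<in> G \<Longrightarrow> \<nu> a (d a) = 1"
  using coc unfolding normalized_continuous_2cocycle_def Let_def
  by (metis div)+

lemma nu_nz: "a \<in> G \<Longrightarrow> b \<in> G \<Longrightarrow> d a = r b \<Longrightarrow> \<nu> a b \<noteq> 0"
  using coc unfolding normalized_continuous_2cocycle_def Let_def composable_def by blast

lemma nu_lc: "p \<in> composable G d r \<Longrightarrow> \<exists>W. openin (subtopology (prod_topology T T) (composable G d r)) W \<and> p \<in> W \<and>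
           (\<forall>q \<in> W. \<nu> (fst q) (snd q) = \<nu> (fst p) (snd p))"
  using coc unfolding normalized_continuous_2cocycle_def Let_def by blast

lemma iv_cont: "continuous_map T T iv"
  using ample unfolding ample_groupoid_def etale_groupoid_def topological_groupoid_def by blast

lemma etale: "x \<in> G \<Longrightarrow> \<exists>U. openin T U \<and> x \<in> U \<and> openin T (d ` U) \<and>
        homeomorphic_map (subtopology T U) (subtopology T (d ` U)) d"
  using ample unfolding ample_groupoid_def etale_groupoid_def by blast

lemma basis: "openin T W \<Longrightarrow> x \<in> W \<Longrightarrow> \<exists>U. compact_open_slice T d r U \<and> x \<in> U \<and> U \<subseteq> W"
  using ample unfolding ample_groupoid_def by blast

end

context AG begin

lemma d_pre_open: assumes Ob: "openin T Ob" shows "openin T {x \<in> G. d x \<in> Ob}"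
proof (subst openin_subopen, intro ballI)
  fix x assume x: "x \<in> {x \<in> G. d x \<in> Ob}"
  then obtain U where U: "openin T U" "x \<in> U" "openin T (d ` U)"
    and h: "homeomorphic_map (subtopology T U) (subtopology T (d ` U)) d"
    using etale by blast
  have c: "continuous_map (subtopology T U) (subtopology T (d ` U)) d"
    using h homeomorphic_imp_continuous_map by blast
  have "openin (subtopology T (d ` U)) (Ob \<inter> d ` U)"
    using Ob by (simp add: openin_subtopology_Int)
  then have "openin (subtopology T U) {y \<in> topspace (subtopology T U). d y \<in> Ob \<inter> d ` U}"
    using c openin_continuous_map_preimage by blast
  moreover have "{y \<in> topspace (subtopology T U). d y \<in> Ob \<inter> d ` U} = U \<inter> {y \<in> G. d y \<in> Ob}"
    using openin_subset[OF U(1)] by auto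
  ultimately have "openin T (U \<inter> {y \<in> G. d y \<in> Ob})"
    using U(1) openin_trans_full by metis
  then show "\<exists>T'. openin T T' \<and> x \<in> T' \<and> T' \<subseteq> {x \<in> G. d x \<in> Ob}"
    using x U by blast
qed

lemma d_cont: "continuous_map T T d"
  unfolding continuous_map_def using d_pre_open by auto

lemma r_cont: "continuous_map T T r"
proof -
  have "continuous_map T T (d \<circ> iv)" using d_cont iv_cont continuous_map_compose by blast
  then show ?thesis by (rule continuous_map_eq) simp
qed

lemma r_pre_open: "openin T Ob \<Longrightarrow> openin T {x \<in> G. r x \<in> Ob}"
  using r_cont openin_continuous_map_preimage by blast

lemma d_open_map: assumes B: "openin T B" shows "openin T (d ` B)"
proof (subst openin_subopen, intro ballI)
  fix y assume "y \<in> d ` B"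
  then obtain x where x: "x \<in> B" "y = d x" by blast
  then have xG: "x \<in> G" using openin_subset B by blast
  then obtain U where U: "openin T U" "x \<in> U" "openin T (d ` U)"
    and h: "homeomorphic_map (subtopology T U) (subtopology T (d ` U)) d"
    using etale by blast
  have "open_map (subtopology T U) (subtopology T (d ` U)) d"
    using h homeomorphic_imp_open_map by blast
  moreover have "openin (subtopology T U) (B \<inter> U)"
    using B by (simp add: openin_subtopology_Int)
  ultimately have "openin (subtopology T (d ` U)) (d ` (B \<inter> U))"
    unfolding open_map_def by blast
  then have "openin T (d ` (B \<inter> U))" using U(3) openin_trans_full by blast
  then show "\<exists>T'. openin T T' \<and> y \<in> T' \<and> T' \<subseteq> d ` B"
    using x U by blast
qed

lemma iv_image: assumes "S \<subseteq> G" shows "iv ` S = {x \<in> G. iv x \<in> S}"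
proof (intro equalityI subsetI)
  fix x assume "x \<in> iv ` S"
  then obtain s where s: "s \<in> S" "x = iv s" by blast
  then have "s \<in> G" using assms by blast
  then show "x \<in> {x \<in> G. iv x \<in> S}" using s by simp
next
  fix x assume x: "x \<in> {x \<in> G. iv x \<in> S}"
  then have "x = iv (iv x)" by simp
  then show "x \<in> iv ` S" using x by blast
qed

lemma iv_open_map: assumes "openin T S" shows "openin T (iv ` S)"
proof -
  have "iv ` S = {x \<in> G. iv x \<in> S}" using iv_image openin_subset assms by blast
  moreover have "openin T {x \<in> G. iv x \<in> S}" using iv_cont assms by (rule openin_continuous_map_preimage)
  ultimately show ?thesis by simp
qed

lemma r_open_map: assumes "openin T S" shows "openin T (r ` S)"
proof -
  have "r ` S = d ` (iv ` S)" unfolding image_image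
    using openin_subset[OF assms] by (intro image_cong) auto
  then show ?thesis using d_open_map iv_open_map assms by simp
qed

lemma cos_iv: assumes "compact_open_slice T d r S" shows "compact_open_slice T d r (iv ` S)"
proof -
  have S: "openin T S" "inj_on d S" "inj_on r S" "compactin T S" "S \<subseteq> G"
    using assms unfolding compact_open_slice_def slice_def using openin_subset by auto
  have "inj_on d (iv ` S)"
  proof (rule inj_onI)
    fix x y assume "x \<in> iv ` S" "y \<in> iv ` S" "d x = d y"
    then obtain a b where "a \<in> S" "b \<in> S" "x = iv a" "y = iv b" "d (iv a) = d (iv b)" by blast
    moreover then have "a \<in> G" "b \<in> G" using S by auto
    ultimately show "x = y" using S(3) by (auto simp: inj_on_def)
  qed
  moreover have "inj_on r (iv ` S)"
  proof (rule inj_onI)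
    fix x y assume "x \<in> iv ` S" "y \<in> iv ` S" "r x = r y"
    then obtain a b where "a \<in> S" "b \<in> S" "x = iv a" "y = iv b" "r (iv a) = r (iv b)" by blast
    moreover then have "a \<in> G" "b \<in> G" using S by auto
    ultimately show "x = y" using S(2) by (auto simp: inj_on_def)
  qed
  moreover have "openin T (iv ` S)" using S(1) by (rule iv_open_map)
  moreover have "compactin T (iv ` S)" using S(4) iv_cont by (rule image_compactin)
  ultimately show ?thesis unfolding compact_open_slice_def slice_def by blast
qed

lemma units_slice: assumes "openin T V" "V \<subseteq> G0" shows "slice T d r V"
proof -
  have h: "\<forall>x\<in>V. d x = x \<and> r x = x" using assms(2) by auto
  then show ?thesis using assms(1) unfolding slice_def inj_on_def by metis
qed

lemma cos_units: "openin T V \<Longrightarrow> compactin T V \<Longrightarrow> V \<subseteq> G0 \<Longrightarrow> compact_open_slice T d r V"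
  using units_slice compact_open_slice_def by blast

lemma cos_d: assumes "compact_open_slice T d r S" shows "compact_open_slice T d r (d ` S)"
proof -
  have S: "openin T S" "compactin T S" "S \<subseteq> G"
    using assms unfolding compact_open_slice_def slice_def using openin_subset by auto
  have "openin T (d ` S)" using S(1) by (rule d_open_map)
  moreover have "compactin T (d ` S)" using S(2) d_cont by (rule image_compactin)
  ultimately show ?thesis using cos_units S(3) by blast
qed

lemma cos_sub: "compact_open_slice T d r S \<Longrightarrow> S \<subseteq> G"
  unfolding compact_open_slice_def slice_def using openin_subset by auto

end

context AG begin

abbreviation SA :: "('g \<Rightarrow> 'k) set" where "SA \<equiv> steinberg_algebra T d r"
abbreviation "cv \<equiv> twisted_conv G d r mul \<nu>"

lemma sa_single: assumes "compact_open_slice T d r U" shows "(\<lambda>x. c * indicator U x) \<in> SA"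
proof -
  have "(\<lambda>x. c * indicator U x) = (\<lambda>x. \<Sum>V\<in>{U}. (\<lambda>_. c) V * indicator V x)" by (intro ext) (simp only: sum.insert finite.emptyI empty_iff not_False_eq_True sum.empty add_0_right)
  then show ?thesis using assms unfolding steinberg_algebra_def
    by (intro CollectI exI[of _ "{U}"] exI[of _ "\<lambda>_. c"] conjI) simp_all
qed

lemma sa_zero: "(\<lambda>_. 0) \<in> SA"
  unfolding steinberg_algebra_def
  by (rule CollectI, rule exI[of _ "{}"]) simp

lemma sa_G: assumes "f \<in> SA" "x \<notin> G" shows "f x = 0"
proof -
  obtain F c where F: "finite F" "\<forall>U\<in>F. compact_open_slice T d r U" "f = (\<lambda>x. \<Sum>U\<in>F. c U * indicator U x)"
    using assms(1) unfolding steinberg_algebra_def by blast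
  have "\<forall>U\<in>F. indicator U x = (0::'k)" using F(2) cos_sub assms(2) by (auto simp: indicator_def)
  then show ?thesis using F(3) by simp
qed

lemma conv_unit_left: assumes P: "P \<subseteq> G0"
  shows "cv (\<lambda>x. c * indicator P x) g = (\<lambda>x. if x \<in> G \<and> r x \<in> P then c * g x else 0)"
proof
  fix x
  have Pu: "\<And>a. a \<in> P \<Longrightarrow> a \<in> G \<and> d a = a \<and> r a = a" using P by auto
  have "{(a,b). a\<in>G \<and> b\<in>G \<and> d a = r b \<and> mul a b = x \<and> c * indicator P a \<noteq> 0 \<and> g b \<noteq> 0}
     = (if x\<in>G \<and> r x \<in> P \<and> c \<noteq> 0 \<and> g x \<noteq> 0 then {(r x, x)} else {})"
    using Pu by (auto simp: indicator_def split: if_splits)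
  then show "cv (\<lambda>x. c * indicator P x) g x = (if x \<in> G \<and> r x \<in> P then c * g x else 0)"
    unfolding twisted_conv_def by (auto simp: indicator_def)
qed

lemma conv_unit_right: assumes P: "P \<subseteq> G0"
  shows "cv g (\<lambda>x. c * indicator P x) = (\<lambda>x. if x \<in> G \<and> d x \<in> P then c * g x else 0)"
proof
  fix x
  have Pu: "\<And>a. a \<in> P \<Longrightarrow> a \<in> G \<and> d a = a \<and> r a = a" using P by auto
  have "{(a,b). a\<in>G \<and> b\<in>G \<and> d a = r b \<and> mul a b = x \<and> g a \<noteq> 0 \<and> c * indicator P b \<noteq> 0}
     = (if x\<in>G \<and> d x \<in> P \<and> c \<noteq> 0 \<and> g x \<noteq> 0 then {(x, d x)} else {})"
    using Pu by (auto simp: indicator_def split: if_splits)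
  then show "cv g (\<lambda>x. c * indicator P x) x = (if x \<in> G \<and> d x \<in> P then c * g x else 0)"
    unfolding twisted_conv_def by (auto simp: indicator_def)
qed

lemma conv_iv_at: assumes S: "inj_on d S" "S \<subseteq> G" and s: "s \<in> S"
  shows "cv (\<lambda>x. indicator (iv ` S) x) g (d s) = \<nu> (iv s) s * g s"
proof -
  have sG: "s \<in> G" using s S by blast
  have "{(a,b). a\<in>G \<and> b\<in>G \<and> d a = r b \<and> mul a b = d s \<and> indicator (iv ` S) a \<noteq> (0::'k) \<and> g b \<noteq> 0}
     = (if g s \<noteq> 0 then {(iv s, s)} else {})" (is "?L = ?R")
  proof (intro equalityI subsetI)
    fix p assume "p \<in> ?L"
    then obtain a b t where p: "p = (a,b)" "a \<in> G" "b \<in> G" "d a = r b" "mul a b = d s" "t \<in> S" "a = iv t"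
       "g b \<noteq> 0" by (auto simp: indicator_def split: if_splits)
    have tG: "t \<in> G" using p S by blast
    have "d s = r (d s)" using sG by simp
    also have "... = r (mul a b)" using p by simp
    also have "... = r a" using p(2,3,4) by (rule rmul)
    also have "... = d t" using p tG by simp
    finally have "d t = d s" by simp
    then have ts: "t = s" using S(1) p(6) s inj_on_def by metis
    have "b = mul (r b) b" using p by simp
    also have "r b = mul s (iv s)" using p ts sG tG by simp
    also have "mul (mul s (iv s)) b = mul s (mul (iv s) b)" using p sG tG ts by (intro assoc) simp_all
    also have "mul (iv s) b = d s" using p ts tG by simp
    also have "mul s (d s) = s" using sG by simp
    finally have "b = s" .
    then show "p \<in> ?R" using p ts by simp
  next
    fix p assume "p \<in> ?R"
    then show "p \<in> ?L" using s sG by (auto simp: indicator_def split: if_splits)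
  qed
  then show ?thesis unfolding twisted_conv_def using s by (auto simp: indicator_def)
qed

lemma conv_iv_off: assumes S: "inj_on r S" "S \<subseteq> G" and x: "x \<notin> d ` S"
  shows "cv (\<lambda>x. indicator (iv ` S) x) (\<lambda>x. indicator S x) x = 0"
proof -
  have E: "{(a,b). a\<in>G \<and> b\<in>G \<and> d a = r b \<and> mul a b = x \<and> indicator (iv ` S) a \<noteq> (0::'k) \<and> indicator S b \<noteq> (0::'k)} = {}"
  proof (rule ccontr)
    assume "\<not> ?thesis"
    then obtain a b t where p: "a \<in> G" "b \<in> G" "d a = r b" "mul a b = x" "t \<in> S" "a = iv t"
       "b \<in> S" by (auto simp: indicator_def split: if_splits)
    have tG: "t \<in> G" using p S by blast
    have "r t = r b" using p tG by simp
    then have "t = b" using S(1) p inj_on_def by metis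
    then have "x = d b" using p tG by simp
    then show False using x p by blast
  qed
  show ?thesis unfolding twisted_conv_def E by simp
qed

end

context AG begin

lemma split_open: assumes "openin T Ob" "Ob \<noteq> {}" "openin T U"
  shows "\<exists>O'. openin T O' \<and> O' \<subseteq> Ob \<and> O' \<noteq> {} \<and> (O' \<subseteq> U \<or> O' \<inter> U = {})"
proof (cases "Ob \<inter> U = {}")
  case True then show ?thesis using assms by blast
next
  case False
  then show ?thesis using assms by (intro exI[of _ "Ob \<inter> U"]) auto
qed

lemma eff_one:
  assumes eff: "effective T d r" and haus: "Hausdorff_space (subtopology T G0)"
    and U: "openin T U" "inj_on d U" and Ob: "openin T Ob" "Ob \<subseteq> G0" "Ob \<noteq> {}"
  shows "\<exists>O'. openin T O' \<and> O' \<subseteq> Ob \<and> O' \<noteq> {} \<and> (\<forall>x\<in>U. d x \<in> O' \<and> r x \<in> O' \<longrightarrow> x \<in> G0)"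
proof (cases "\<exists>x\<in>U. d x \<in> Ob \<and> r x \<noteq> d x")
  case True
  then obtain x where x: "x \<in> U" "d x \<in> Ob" "r x \<noteq> d x" by blast
  have xG: "x \<in> G" using x U openin_subset by blast
  have rx0: "r x \<in> G0" using xG by (metis dr rG image_eqI)
  have dx0: "d x \<in> G0" using xG by blast
  have top: "d x \<in> topspace (subtopology T G0)" "r x \<in> topspace (subtopology T G0)"
    using rx0 dx0 xG by auto
  obtain P' Q' where PQ: "openin (subtopology T G0) P'" "openin (subtopology T G0) Q'"
    "d x \<in> P'" "r x \<in> Q'" "disjnt P' Q'"
    using haus[unfolded Hausdorff_space_def, rule_format, of "d x" "r x"] top x(3) by auto
  obtain P where P: "openin T P" "P' = P \<inter> G0" using PQ(1) unfolding openin_subtopology by blast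
  obtain Q where Q: "openin T Q" "Q' = Q \<inter> G0" using PQ(2) unfolding openin_subtopology by blast
  define O1 where "O1 = Ob \<inter> P \<inter> d ` (U \<inter> {y \<in> G. r y \<in> Q})"
  have "openin T (U \<inter> {y \<in> G. r y \<in> Q})" using U(1) r_pre_open[OF Q(1)] by blast
  then have "openin T (d ` (U \<inter> {y \<in> G. r y \<in> Q}))" by (rule d_open_map)
  then have o1: "openin T O1" unfolding O1_def using Ob(1) P(1) by (intro openin_Int)
  have "d x \<in> O1" unfolding O1_def using x xG PQ(3,4) P(2) Q(2) by blast
  moreover have "\<forall>y\<in>U. d y \<in> O1 \<and> r y \<in> O1 \<longrightarrow> y \<in> G0"
  proof (intro ballI impI)
    fix y assume y: "y \<in> U" "d y \<in> O1 \<and> r y \<in> O1"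
    then obtain z where z: "z \<in> U" "r z \<in> Q" "d y = d z" unfolding O1_def by blast
    then have "y = z" using U(2) y(1) inj_on_def by metis
    moreover have "y \<in> G" using y U openin_subset by blast
    moreover then have "r y \<in> G0" by (metis dr image_eqI rG)
    ultimately have "r y \<in> P' \<and> r y \<in> Q'" using y z P Q unfolding O1_def by blast
    then show "y \<in> G0" using PQ(5) unfolding disjnt_iff by blast
  qed
  moreover have "O1 \<subseteq> Ob" unfolding O1_def by blast
  ultimately show ?thesis using o1 by (intro exI[of _ O1]) blast
next
  case False
  define X where "X = U \<inter> {y \<in> G. d y \<in> Ob}"
  have "openin T X" unfolding X_def using U(1) d_pre_open[OF Ob(1)] by blast
  moreover have "X \<subseteq> isotropy G d r" unfolding X_def isotropy_def using False by auto
  ultimately have "X \<subseteq> T interior_of isotropy G d r" by (rule interior_of_maximal[rotated])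
  then have "X \<subseteq> G0" using eff unfolding effective_def unit_space_def by simp
  then have "\<forall>x\<in>U. d x \<in> Ob \<and> r x \<in> Ob \<longrightarrow> x \<in> G0"
    unfolding X_def using U(1) openin_subset by blast
  then show ?thesis using Ob by (intro exI[of _ Ob]) blast
qed

lemma shrink_one:
  assumes eff: "effective T d r" and haus: "Hausdorff_space (subtopology T G0)"
    and U: "compact_open_slice T d r U" and Ob: "openin T Ob" "Ob \<subseteq> G0" "Ob \<noteq> {}"
  shows "\<exists>O'. openin T O' \<and> O' \<subseteq> Ob \<and> O' \<noteq> {} \<and> (\<forall>x\<in>U. d x \<in> O' \<and> r x \<in> O' \<longrightarrow> x \<in> G0)
     \<and> (O' \<subseteq> U \<or> O' \<inter> U = {})"
proof -
  have U': "openin T U" "inj_on d U" using U unfolding compact_open_slice_def slice_def by auto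
  obtain O1 where O1: "openin T O1" "O1 \<subseteq> Ob" "O1 \<noteq> {}" "\<forall>x\<in>U. d x \<in> O1 \<and> r x \<in> O1 \<longrightarrow> x \<in> G0"
    using eff_one[OF eff haus U' Ob] by blast
  obtain O2 where "openin T O2" "O2 \<subseteq> O1" "O2 \<noteq> {}" "O2 \<subseteq> U \<or> O2 \<inter> U = {}"
    using split_open[OF O1(1,3) U'(1)] by blast
  then show ?thesis using O1 by (intro exI[of _ O2]) blast
qed

lemma shrink_many:
  assumes eff: "effective T d r" and haus: "Hausdorff_space (subtopology T G0)"
    and F: "finite F" "\<forall>U\<in>F. compact_open_slice T d r U"
  shows "\<forall>Ob. openin T Ob \<and> Ob \<subseteq> G0 \<and> Ob \<noteq> {} \<longrightarrow>
     (\<exists>O'. openin T O' \<and> O' \<subseteq> Ob \<and> O' \<noteq> {} \<and>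
       (\<forall>U\<in>F. (\<forall>x\<in>U. d x \<in> O' \<and> r x \<in> O' \<longrightarrow> x \<in> G0) \<and> (O' \<subseteq> U \<or> O' \<inter> U = {})))"
  using F
proof (induction F rule: finite_induct)
  case empty then show ?case by blast
next
  case (insert U F)
  have cF: "\<forall>V\<in>F. compact_open_slice T d r V" using insert.prems by blast
  have cU: "compact_open_slice T d r U" using insert.prems by blast
  note IH = insert.IH[OF cF]
  show ?case
  proof (intro allI impI)
    fix Ob assume Ob: "openin T Ob \<and> Ob \<subseteq> G0 \<and> Ob \<noteq> {}"
    obtain O1 where O1: "openin T O1" "O1 \<subseteq> Ob" "O1 \<noteq> {}"
      "\<forall>V\<in>F. (\<forall>x\<in>V. d x \<in> O1 \<and> r x \<in> O1 \<longrightarrow> x \<in> G0) \<and> (O1 \<subseteq> V \<or> O1 \<inter> V = {})"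
      using IH[rule_format, OF Ob] by blast
    have "O1 \<subseteq> G0" using O1(2) Ob by blast
    then obtain O2 where O2: "openin T O2" "O2 \<subseteq> O1" "O2 \<noteq> {}" "\<forall>x\<in>U. d x \<in> O2 \<and> r x \<in> O2 \<longrightarrow> x \<in> G0"
       "O2 \<subseteq> U \<or> O2 \<inter> U = {}"
      using shrink_one[OF eff haus cU O1(1) _ O1(3)] by blast
    have "\<forall>V\<in>F. (\<forall>x\<in>V. d x \<in> O2 \<and> r x \<in> O2 \<longrightarrow> x \<in> G0) \<and> (O2 \<subseteq> V \<or> O2 \<inter> V = {})"
      using O1(4) O2(2) by blast
    then have "\<forall>V\<in>insert U F. (\<forall>x\<in>V. d x \<in> O2 \<and> r x \<in> O2 \<longrightarrow> x \<in> G0) \<and> (O2 \<subseteq> V \<or> O2 \<inter> V = {})"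
      using O2(4,5) by blast
    moreover have "O2 \<subseteq> Ob" using O1(2) O2(2) by blast
    ultimately show "\<exists>O'. openin T O' \<and> O' \<subseteq> Ob \<and> O' \<noteq> {} \<and>
       (\<forall>V\<in>insert U F. (\<forall>x\<in>V. d x \<in> O' \<and> r x \<in> O' \<longrightarrow> x \<in> G0) \<and> (O' \<subseteq> V \<or> O' \<inter> V = {}))"
      using O2(1,3) by blast
  qed
qed

end

context AG begin

lemma sa_ind: "compact_open_slice T d r U \<Longrightarrow> (\<lambda>x. indicator U x) \<in> SA"
  using sa_single[of U 1] by simp

lemma conv_unit_left1: "P \<subseteq> G0 \<Longrightarrow>
   cv (\<lambda>x. indicator P x) g = (\<lambda>x. if x \<in> G \<and> r x \<in> P then g x else 0)"
  using conv_unit_left[of P 1 g] by (auto simp: fun_eq_iff)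

lemma conv_unit_right1: "P \<subseteq> G0 \<Longrightarrow>
   cv g (\<lambda>x. indicator P x) = (\<lambda>x. if x \<in> G \<and> d x \<in> P then g x else 0)"
  using conv_unit_right[of P g 1] by (auto simp: fun_eq_iff)

context fixes I assumes id: "two_sided_ideal SA cv I"
begin
lemma id_sub: "I \<subseteq> SA" and id_zero: "(\<lambda>_. 0) \<in> I"
  and id_add: "f \<in> I \<Longrightarrow> g \<in> I \<Longrightarrow> (\<lambda>x. f x + g x) \<in> I"
  and id_neg: "f \<in> I \<Longrightarrow> (\<lambda>x. - f x) \<in> I"
  and id_left: "a \<in> SA \<Longrightarrow> f \<in> I \<Longrightarrow> cv a f \<in> I"
  and id_right: "f \<in> I \<Longrightarrow> a \<in> SA \<Longrightarrow> cv f a \<in> I"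
  using id unfolding two_sided_ideal_def by blast+
end

lemma main_unit:
  assumes eff: "effective T d r" and haus: "Hausdorff_space (subtopology T G0)"
    and supp: "\<forall>f\<in>SA. f \<noteq> (\<lambda>_. 0) \<longrightarrow> T interior_of {x. f x \<noteq> 0} \<noteq> {}"
    and id: "two_sided_ideal SA cv I" and fI: "f \<in> I" and fnz: "f \<noteq> (\<lambda>_. 0)"
  shows "\<exists>V. compact_open_slice T d r V \<and> V \<subseteq> G0 \<and> V \<noteq> {} \<and> (\<lambda>x. indicator V x) \<in> I"
proof -
  have fSA: "f \<in> SA" using fI id_sub[OF id] by blast
  define W where "W = T interior_of {x. f x \<noteq> 0}"
  have W: "openin T W" "W \<noteq> {}" "W \<subseteq> {x. f x \<noteq> 0}"
    unfolding W_def using supp fSA fnz interior_of_subset[of T "{x. f x \<noteq> 0}"] by auto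
  obtain \<gamma> where g: "\<gamma> \<in> W" using W(2) by blast
  obtain B where B: "compact_open_slice T d r B" "\<gamma> \<in> B" "B \<subseteq> W" using basis[OF W(1) g] by blast
  have Bp: "openin T B" "inj_on d B" "inj_on r B" "B \<subseteq> G"
    using B(1) cos_sub unfolding compact_open_slice_def slice_def by auto
  define h where "h = cv (\<lambda>x. indicator (iv ` B) x) f"
  have hI: "h \<in> I" unfolding h_def using id_left[OF id sa_ind[OF cos_iv[OF B(1)]] fI] .
  have hSA: "h \<in> SA" using hI id_sub[OF id] by blast
  have hB: "h (d s) \<noteq> 0" if s: "s \<in> B" for s
  proof -
    have sG: "s \<in> G" using s Bp by blast
    have "h (d s) = \<nu> (iv s) s * f s" unfolding h_def using conv_iv_at[OF Bp(2,4) s] .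
    moreover have "\<nu> (iv s) s \<noteq> 0" using sG by (intro nu_nz) simp_all
    moreover have "f s \<noteq> 0" using s B(3) W(3) by blast
    ultimately show ?thesis by simp
  qed
  obtain F c where F: "finite F" "\<forall>U\<in>F. compact_open_slice T d r U"
    "h = (\<lambda>x. \<Sum>U\<in>F. c U * indicator U x)"
    using hSA unfolding steinberg_algebra_def by blast
  have Ob: "openin T (d ` B) \<and> d ` B \<subseteq> G0 \<and> d ` B \<noteq> {}"
    using d_open_map[OF Bp(1)] Bp(4) B(2) by blast
  obtain O' where O': "openin T O'" "O' \<subseteq> d ` B" "O' \<noteq> {}"
    "\<forall>U\<in>F. (\<forall>x\<in>U. d x \<in> O' \<and> r x \<in> O' \<longrightarrow> x \<in> G0) \<and> (O' \<subseteq> U \<or> O' \<inter> U = {})"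
    using shrink_many[OF eff haus F(1,2), rule_format, OF Ob] by blast
  obtain u0 where u0: "u0 \<in> O'" using O'(3) by blast
  define lam where "lam = h u0"
  have lnz: "lam \<noteq> 0" unfolding lam_def using u0 O'(2) hB by blast
  have hO: "h x = lam" if x: "x \<in> O'" for x
  proof -
    have "\<forall>U\<in>F. indicator U x = (indicator U u0 :: 'k)"
      using O'(4) x u0 by (auto simp: indicator_def)
    then show ?thesis unfolding lam_def F(3) by (intro sum.cong) simp_all
  qed
  have h0: "h x = 0" if x: "x \<in> G" "d x \<in> O'" "r x \<in> O'" "x \<notin> G0" for x
  proof -
    have "\<forall>U\<in>F. indicator U x = (0 :: 'k)"
      using O'(4) x by (auto simp: indicator_def)
    then show ?thesis unfolding F(3) by simp
  qed
  obtain V where V: "compact_open_slice T d r V" "u0 \<in> V" "V \<subseteq> O'" using basis[OF O'(1) u0] by blast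
  have VG0: "V \<subseteq> G0" using V(3) O'(2) Bp(4) by blast
  have e1: "cv (\<lambda>x. indicator V x) h \<in> I" using id_left[OF id sa_ind[OF V(1)] hI] .
  have e2: "cv (cv (\<lambda>x. indicator V x) h) (\<lambda>x. indicator V x) \<in> I"
    using id_right[OF id e1 sa_ind[OF V(1)]] .
  have "cv (cv (\<lambda>x. indicator V x) h) (\<lambda>x. indicator V x)
      = (\<lambda>x. if x\<in>G \<and> d x \<in> V then (if x \<in> G \<and> r x \<in> V then h x else 0) else 0)"
    using conv_unit_left1[OF VG0] conv_unit_right1[OF VG0] by simp
  also have "\<dots> = (\<lambda>x. lam * indicator V x)"
  proof
    fix x
    show "(if x\<in>G \<and> d x \<in> V then (if x \<in> G \<and> r x \<in> V then h x else 0) else 0) = lam * indicator V x"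
    proof (cases "x \<in> V")
      case True
      then have "x \<in> G0" using VG0 by blast
      then have "x \<in> G" "d x = x" "r x = x" by auto
      then show ?thesis using True hO[of x] V(3) by auto
    next
      case False
      have "h x = 0" if "x \<in> G" "d x \<in> V" "r x \<in> V"
      proof (cases "x \<in> G0")
        case True
        then have "d x = x" by auto
        then show ?thesis using False that by simp
      next
        case False
        then show ?thesis using h0 that V(3) by blast
      qed
      then show ?thesis using False by auto
    qed
  qed
  finally have e3: "(\<lambda>x. lam * indicator V x) \<in> I" using e2 by simp
  have e4: "cv (\<lambda>x. inverse lam * indicator V x) (\<lambda>x. lam * indicator V x) \<in> I"
    using id_left[OF id sa_single[OF V(1)] e3] .
  have "cv (\<lambda>x. inverse lam * indicator V x) (\<lambda>x. lam * indicator V x) = (\<lambda>x. indicator V x)"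
  proof -
    have "cv (\<lambda>x. inverse lam * indicator V x) (\<lambda>x. lam * indicator V x)
       = (\<lambda>x. if x \<in> G \<and> r x \<in> V then inverse lam * (lam * indicator V x) else 0)"
      using conv_unit_left[OF VG0] .
    also have "\<dots> = (\<lambda>x. indicator V x)"
    proof
      fix x show "(if x \<in> G \<and> r x \<in> V then inverse lam * (lam * indicator V x) else 0) = indicator V x"
      proof (cases "x \<in> V")
        case True
        then have "x \<in> G0" using VG0 by blast
        then have "x \<in> G" "r x = x" by auto
        then show ?thesis using True lnz by simp
      qed auto
    qed
    finally show ?thesis .
  qed
  then have "(\<lambda>x. indicator V x) \<in> I" using e4 by simp
  then show ?thesis using V(1,2) VG0 by blast
qed

end

context AG begin

lemma spread_local:
  assumes mini: "minimal T d r" and id: "two_sided_ideal SA cv I"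
    and V: "compact_open_slice T d r V" "V \<subseteq> G0" "V \<noteq> {}" and VI: "(\<lambda>x. indicator V x) \<in> I"
    and K: "K \<subseteq> G0" "openin T K" and u: "u \<in> K"
  shows "\<exists>S. compact_open_slice T d r S \<and> u \<in> d ` S \<and> d ` S \<subseteq> K \<and> (\<lambda>x. indicator (d ` S) x) \<in> I"
proof -
  have uG0: "u \<in> G0" using u K by blast
  have cl: "(subtopology T G0) closure_of (orbit G d r u) = G0"
    using mini uG0 unfolding minimal_def unit_space_def by blast
  obtain v where v: "v \<in> V" using V(3) by blast
  have "v \<in> (subtopology T G0) closure_of (orbit G d r u)" using cl v V(2) by blast
  moreover have "openin (subtopology T G0) V"
    unfolding openin_subtopology using V(1,2) unfolding compact_open_slice_def slice_def by blast
  ultimately obtain y where "y \<in> orbit G d r u" "y \<in> V" using v unfolding in_closure_of by blast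
  then obtain a where a: "a \<in> G" "d a = u" "r a \<in> V" unfolding orbit_def by blast
  have pc: "(iv a, a) \<in> composable G d r" using a(1) unfolding composable_def by simp
  obtain Wn where Wn: "openin (subtopology (prod_topology T T) (composable G d r)) Wn" "(iv a, a) \<in> Wn"
    "\<forall>q\<in>Wn. \<nu> (fst q) (snd q) = \<nu> (fst (iv a, a)) (snd (iv a, a))"
    using nu_lc[OF pc] by blast
  have cm0: "continuous_map T (prod_topology T T) (\<lambda>b. (iv b, b))"
    using iv_cont continuous_map_id unfolding continuous_map_paired id_def by blast
  have cm: "continuous_map T (subtopology (prod_topology T T) (composable G d r)) (\<lambda>b. (iv b, b))"
    unfolding continuous_map_in_subtopology using cm0 by (auto simp: composable_def Pi_def)
  define N0 where "N0 = {b \<in> G. (iv b, b) \<in> Wn}"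
  have N0: "openin T N0" unfolding N0_def using openin_continuous_map_preimage[OF cm Wn(1)] by simp
  define N where "N = N0 \<inter> {b\<in>G. d b \<in> K} \<inter> {b\<in>G. r b \<in> V}"
  have "openin T V" using V(1) unfolding compact_open_slice_def slice_def by blast
  then have oN: "openin T N" unfolding N_def using N0 d_pre_open[OF K(2)] r_pre_open
    by (intro openin_Int) auto
  have aN: "a \<in> N" unfolding N_def N0_def using a Wn(2) u by simp
  obtain S where S: "compact_open_slice T d r S" "a \<in> S" "S \<subseteq> N" using basis[OF oN aN] by blast
  have Sp: "openin T S" "inj_on d S" "inj_on r S" "S \<subseteq> G"
    using S(1) cos_sub unfolding compact_open_slice_def slice_def by auto
  define mu where "mu = \<nu> (iv a) a"
  have hS: "\<nu> (iv b) b = mu" if "b \<in> S" for b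
  proof -
    have "(iv b, b) \<in> Wn" using that S(3) unfolding N_def N0_def by blast
    from Wn(3)[rule_format, OF this] show ?thesis unfolding mu_def by simp
  qed
  have munz: "mu \<noteq> 0" unfolding mu_def using a(1) by (intro nu_nz) simp_all
  have dSG0: "d ` S \<subseteq> G0" using Sp(4) by blast
  have g1: "cv (\<lambda>x. indicator V x) (\<lambda>x. indicator S x) \<in> I"
    using id_right[OF id VI sa_ind[OF S(1)]] .
  have "cv (\<lambda>x. indicator V x) (\<lambda>x. indicator S x) = (\<lambda>x. indicator S x)"
  proof -
    have "cv (\<lambda>x. indicator V x) (\<lambda>x. indicator S x) = (\<lambda>x. if x \<in> G \<and> r x \<in> V then indicator S x else 0)"
      using conv_unit_left1[OF V(2)] .
    also have "\<dots> = (\<lambda>x. indicator S x)"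
      using S(3) Sp(4) unfolding N_def by (auto simp: indicator_def fun_eq_iff)
    finally show ?thesis .
  qed
  then have g1': "(\<lambda>x. indicator S x) \<in> I" using g1 by simp
  have g2: "cv (\<lambda>x. indicator (iv ` S) x) (\<lambda>x. indicator S x) \<in> I"
    using id_left[OF id sa_ind[OF cos_iv[OF S(1)]] g1'] .
  have "cv (\<lambda>x. indicator (iv ` S) x) (\<lambda>x. indicator S x) = (\<lambda>x. mu * indicator (d ` S) x)"
  proof
    fix x show "cv (\<lambda>x. indicator (iv ` S) x) (\<lambda>x. indicator S x) x = mu * indicator (d ` S) x"
    proof (cases "x \<in> d ` S")
      case True
      then obtain s where s: "s \<in> S" "x = d s" by blast
      have "cv (\<lambda>x. indicator (iv ` S) x) (\<lambda>x. indicator S x) (d s) = \<nu> (iv s) s * indicator S s"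
        using conv_iv_at[OF Sp(2,4) s(1)] .
      then show ?thesis using s hS True by simp
    next
      case False
      then show ?thesis using conv_iv_off[OF Sp(3,4) False] by simp
    qed
  qed
  then have g2': "(\<lambda>x. mu * indicator (d ` S) x) \<in> I" using g2 by simp
  have g3: "cv (\<lambda>x. inverse mu * indicator (d ` S) x) (\<lambda>x. mu * indicator (d ` S) x) \<in> I"
    using id_left[OF id sa_single[OF cos_d[OF S(1)]] g2'] .
  have "cv (\<lambda>x. inverse mu * indicator (d ` S) x) (\<lambda>x. mu * indicator (d ` S) x) = (\<lambda>x. indicator (d ` S) x)"
  proof -
    have "cv (\<lambda>x. inverse mu * indicator (d ` S) x) (\<lambda>x. mu * indicator (d ` S) x)
       = (\<lambda>x. if x \<in> G \<and> r x \<in> d ` S then inverse mu * (mu * indicator (d ` S) x) else 0)"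
      using conv_unit_left[OF dSG0] .
    also have "\<dots> = (\<lambda>x. indicator (d ` S) x)"
    proof
      fix x show "(if x \<in> G \<and> r x \<in> d ` S then inverse mu * (mu * indicator (d ` S) x) else 0) = indicator (d ` S) x"
      proof (cases "x \<in> d ` S")
        case True
        then have "x \<in> G0" using dSG0 by blast
        then have "x \<in> G" "r x = x" by auto
        then show ?thesis using True munz by simp
      qed auto
    qed
    finally show ?thesis .
  qed
  then have "(\<lambda>x. indicator (d ` S) x) \<in> I" using g3 by simp
  moreover have "u \<in> d ` S" using S(2) a(2) by blast
  moreover have "d ` S \<subseteq> K" using S(3) unfolding N_def by blast
  ultimately show ?thesis using S(1) by blast
qed

lemma union_ind:
  assumes id: "two_sided_ideal SA cv I" and F: "finite \<F>"
    "\<forall>P\<in>\<F>. compact_open_slice T d r P \<and> P \<subseteq> G0 \<and> (\<lambda>x. indicator P x) \<in> I"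
  shows "(\<lambda>x. indicator (\<Union>\<F>) x) \<in> I \<and> \<Union>\<F> \<subseteq> G0"
  using F
proof (induction \<F> rule: finite_induct)
  case empty
  have "(\<lambda>x. indicator (\<Union>{}) x :: 'k) = (\<lambda>_. 0)" by simp
  then show ?case using id_zero[OF id] by simp
next
  case (insert P \<F>)
  define Q where "Q = \<Union>\<F>"
  have IH: "(\<lambda>x. indicator Q x) \<in> I" "Q \<subseteq> G0" using insert unfolding Q_def by auto
  have P: "compact_open_slice T d r P" "P \<subseteq> G0" "(\<lambda>x. indicator P x) \<in> I" using insert.prems by auto
  have c1: "cv (\<lambda>x. indicator P x) (\<lambda>x. indicator Q x) \<in> I" using id_left[OF id sa_ind[OF P(1)] IH(1)] .
  have "cv (\<lambda>x. indicator P x) (\<lambda>x. indicator Q x) = (\<lambda>x. if x \<in> G \<and> r x \<in> P then indicator Q x else 0)"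
    using conv_unit_left1[OF P(2)] .
  also have "\<dots> = (\<lambda>x. indicator P x * indicator Q x)"
  proof
    fix x show "(if x \<in> G \<and> r x \<in> P then indicator Q x else 0) = (indicator P x * indicator Q x :: 'k)"
    proof (cases "x \<in> P")
      case True
      then have "x \<in> G0" using P(2) by blast
      then have "x \<in> G" "r x = x" by auto
      then show ?thesis using True by simp
    next
      case False
      have "x \<in> Q \<Longrightarrow> r x = x" using IH(2) by auto
      then show ?thesis using False by (auto simp: indicator_def)
    qed
  qed
  finally have c2: "(\<lambda>x. indicator P x * indicator Q x :: 'k) \<in> I" using c1 by simp
  have "(\<lambda>x. indicator P x + (indicator Q x + - (indicator P x * indicator Q x)) :: 'k) \<in> I"
    using id_add[OF id P(3) id_add[OF id IH(1) id_neg[OF id c2]]] .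
  moreover have "(\<lambda>x. indicator P x + (indicator Q x + - (indicator P x * indicator Q x)) :: 'k)
     = (\<lambda>x. indicator (\<Union>(insert P \<F>)) x)"
    unfolding Q_def by (auto simp: indicator_def fun_eq_iff)
  ultimately show ?case using IH(2) P(2) unfolding Q_def by auto
qed

lemma all_units:
  assumes mini: "minimal T d r" and id: "two_sided_ideal SA cv I"
    and V: "compact_open_slice T d r V" "V \<subseteq> G0" "V \<noteq> {}" and VI: "(\<lambda>x. indicator V x) \<in> I"
    and S0: "compact_open_slice T d r S0"
  shows "(\<lambda>x. indicator (d ` S0) x) \<in> I"
proof -
  define K where "K = d ` S0"
  have Kc: "compact_open_slice T d r K" unfolding K_def using cos_d[OF S0] .
  have K: "K \<subseteq> G0" "openin T K" "compactin T K" using Kc cos_sub[OF S0] unfolding K_def compact_open_slice_def slice_def by auto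
  define \<U> where "\<U> = {d ` S | S. compact_open_slice T d r S \<and> d ` S \<subseteq> K \<and> (\<lambda>x. indicator (d ` S) x) \<in> I}"
  have "\<forall>U\<in>\<U>. openin T U" unfolding \<U>_def compact_open_slice_def slice_def using d_open_map by blast
  moreover have "K \<subseteq> \<Union>\<U>"
  proof
    fix u assume "u \<in> K"
    then obtain S where "compact_open_slice T d r S" "u \<in> d ` S" "d ` S \<subseteq> K" "(\<lambda>x. indicator (d ` S) x) \<in> I"
      using spread_local[OF mini id V VI K(1,2)] by blast
    then show "u \<in> \<Union>\<U>" unfolding \<U>_def by blast
  qed
  ultimately obtain \<F> where F: "finite \<F>" "\<F> \<subseteq> \<U>" "K \<subseteq> \<Union>\<F>"
    using K(3) unfolding compactin_def by meson
  have "\<Union>\<F> \<subseteq> K" using F(2) unfolding \<U>_def by blast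
  then have KF: "\<Union>\<F> = K" using F(3) by blast
  have "\<forall>P\<in>\<F>. compact_open_slice T d r P \<and> P \<subseteq> G0 \<and> (\<lambda>x. indicator P x) \<in> I"
  proof
    fix P assume "P \<in> \<F>"
    then obtain S where S: "P = d ` S" "compact_open_slice T d r S" "(\<lambda>x. indicator (d ` S) x) \<in> I"
      using F(2) unfolding \<U>_def by blast
    then show "compact_open_slice T d r P \<and> P \<subseteq> G0 \<and> (\<lambda>x. indicator P x) \<in> I"
      using cos_d[OF S(2)] cos_sub[OF S(2)] by blast
  qed
  then show ?thesis using union_ind[OF id F(1)] KF unfolding K_def by simp
qed

lemma ideal_sum:
  assumes id: "two_sided_ideal SA cv I" and F: "finite F" "\<forall>U\<in>F. (\<lambda>x. g U x) \<in> I"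
  shows "(\<lambda>x. \<Sum>U\<in>F. g U x) \<in> I"
  using F
proof (induction F rule: finite_induct)
  case empty then show ?case using id_zero[OF id] by simp
next
  case (insert U F)
  then have "(\<lambda>x. g U x + (\<Sum>U\<in>F. g U x)) \<in> I" using id_add[OF id] by simp
  then show ?case using insert by simp
qed

lemma all_in:
  assumes mini: "minimal T d r" and id: "two_sided_ideal SA cv I"
    and V: "compact_open_slice T d r V" "V \<subseteq> G0" "V \<noteq> {}" and VI: "(\<lambda>x. indicator V x) \<in> I"
  shows "SA \<subseteq> I"
proof
  fix f assume "f \<in> SA"
  then obtain F c where F: "finite F" "\<forall>U\<in>F. compact_open_slice T d r U"
    "f = (\<lambda>x. \<Sum>U\<in>F. c U * indicator U x)"
    unfolding steinberg_algebra_def by blast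
  have "\<forall>U\<in>F. (\<lambda>x. c U * indicator U x) \<in> I"
  proof
    fix U assume U: "U \<in> F"
    then have Uc: "compact_open_slice T d r U" using F(2) by blast
    have dU: "d ` U \<subseteq> G0" using cos_sub[OF Uc] by blast
    have "cv (\<lambda>x. c U * indicator U x) (\<lambda>x. indicator (d ` U) x) \<in> I"
      using id_left[OF id sa_single[OF Uc] all_units[OF mini id V VI Uc]] .
    moreover have "cv (\<lambda>x. c U * indicator U x) (\<lambda>x. indicator (d ` U) x) = (\<lambda>x. c U * indicator U x)"
      using conv_unit_right1[OF dU] cos_sub[OF Uc] by (auto simp: fun_eq_iff indicator_def)
    ultimately show "(\<lambda>x. c U * indicator U x) \<in> I" by simp
  qed
  then show "f \<in> I" using ideal_sum[OF id F(1)] F(3) by simp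
qed

end

theorem proposition4p7:
  fixes T :: "'g topology"
    and d r :: "'g \<Rightarrow> 'g"
    and mul :: "'g \<Rightarrow> 'g \<Rightarrow> 'g"
    and iv :: "'g \<Rightarrow> 'g"
    and \<nu> :: "'g \<Rightarrow> 'g \<Rightarrow> 'k::field"
  assumes "ample_groupoid T d r mul iv"
    and "second_countable T"
    and "Hausdorff_space (subtopology T (unit_space (topspace T) d))"
    and "normalized_continuous_2cocycle T d r mul iv \<nu>"
    and "effective T d r"
    and "\<forall>f \<in> (steinberg_algebra T d r :: ('g \<Rightarrow> 'k) set). f \<noteq> (\<lambda>_. 0) \<longrightarrow>
           T interior_of {x. f x \<noteq> 0} \<noteq> {}"
    and "minimal T d r"
  shows "simple_algebra (steinberg_algebra T d r) (twisted_conv (topspace T) d r mul \<nu>)"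
proof -
  interpret AG T d r mul iv \<nu> using assms(1,4) by unfold_locales
  have haus: "Hausdorff_space (subtopology T G0)" using assms(3) unfolding unit_space_def .
  show ?thesis unfolding simple_algebra_def
  proof (intro allI impI)
    fix I assume id: "two_sided_ideal SA cv I"
    show "I = {\<lambda>_. 0} \<or> I = SA"
    proof (cases "\<exists>f\<in>I. f \<noteq> (\<lambda>_. 0)")
      case True
      then obtain f where "f \<in> I" "f \<noteq> (\<lambda>_. 0)" by blast
      then obtain V where V: "compact_open_slice T d r V" "V \<subseteq> G0" "V \<noteq> {}" "(\<lambda>x. indicator V x) \<in> I"
        using main_unit[OF assms(5) haus assms(6) id] by blast
      have "SA \<subseteq> I" using all_in[OF assms(7) id V] .
      then show ?thesis using id_sub[OF id] by blast
    next
      case False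
      then show ?thesis using id_zero[OF id] by blast
    qed
  qed
qed


end
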